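(* Let $k\ge 2$ and $R(z)=\sum_{l=1}^k\frac{\alpha_l}{z-p_l}$ with all $\alpha_l>0$, $p_1=-1$, $p_2=1$, and $p_l>1$ for $3\le l\le k$. Define $g(x)=\operatorname{Re}R\!\left(x+i\sqrt{1-x^2}\right)$ for $x\in(-1,1)$ (the real part of $R$ along the open upper unit half-circle). If $k\ge 3$, then $g$ is strictly decreasing on $(-1,1)$; if $k=2$, then $g$ is constant, equal to $\frac{\alpha_1-\alpha_2}{2}$. *)

theory Defs
  imports Complex_Main
begin

definition ratR :: "nat \<Rightarrow> (nat \<Rightarrow> real) \<Rightarrow> (nat \<Rightarrow> real) \<Rightarrow> complex \<Rightarrow> complex" where
  "ratR k \<alpha> p z = (\<Sum>l=1..k. complex_of_real (\<alpha> l) / (z - complex_of_real (p l)))"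

definition gfun :: "nat \<Rightarrow> (nat \<Rightarrow> real) \<Rightarrow> (nat \<Rightarrow> real) \<Rightarrow> real \<Rightarrow> real" where
  "gfun k \<alpha> p x = Re (ratR k \<alpha> p (Complex x (sqrt (1 - x\<^sup>2))))"

end

theory Submission
  imports Defs
begin

lemma den_pos: "-1 < (x::real) \<Longrightarrow> x < 1 \<Longrightarrow> 0 < 1 + p\<^sup>2 - 2*p*x"
proof -
  assume a: "-1 < x" "x < 1"
  have "x\<^sup>2 < 1" using a by (simp add: abs_square_less_1)
  then have "1 - x\<^sup>2 > 0" by simp
  moreover have "1 + p\<^sup>2 - 2*p*x = (p-x)\<^sup>2 + (1 - x\<^sup>2)" by (simp add: power2_eq_square algebra_simps)
  moreover have "(p-x)\<^sup>2 \<ge> 0" by simp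
  ultimately show ?thesis by linarith
qed

lemma term_re:
  assumes "-1 < (x::real)" "x < 1"
  shows "Re (complex_of_real a / (Complex x (sqrt (1 - x\<^sup>2)) - complex_of_real p))
         = a * (x - p) / (1 + p\<^sup>2 - 2*p*x)"
proof -
  have s: "(sqrt (1 - x\<^sup>2))\<^sup>2 = 1 - x\<^sup>2"
    using assms by (intro real_sqrt_pow2) (simp add: abs_square_less_1 less_imp_le)
  have "(x - p)\<^sup>2 + (sqrt (1 - x\<^sup>2))\<^sup>2 = 1 + p\<^sup>2 - 2*p*x"
    using s by (simp add: power2_eq_square algebra_simps)
  then show ?thesis by (simp add: Re_divide)
qed

lemma gfun_eq:
  assumes "-1 < (x::real)" "x < 1"
  shows "gfun k \<alpha> p x = (\<Sum>l=1..k. \<alpha> l * (x - p l) / (1 + (p l)\<^sup>2 - 2*p l*x))"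
  unfolding gfun_def ratR_def Re_sum using term_re[OF assms] by simp

lemma h_mono:
  assumes "-1 < x" "x < y" "y < (1::real)" "q > 1" "a > 0"
  shows "a * (y - q) / (1 + q\<^sup>2 - 2*q*y) < a * (x - q) / (1 + q\<^sup>2 - 2*q*x)"
proof -
  have dx: "0 < 1 + q\<^sup>2 - 2*q*x" using den_pos assms by auto
  have dy: "0 < 1 + q\<^sup>2 - 2*q*y" using den_pos assms by auto
  have key: "(y - q) * (1 + q\<^sup>2 - 2*q*x) - (x - q) * (1 + q\<^sup>2 - 2*q*y) = (y - x) * (1 - q\<^sup>2)"
    by (simp add: power2_eq_square algebra_simps)
  have "(1 - q\<^sup>2) < 0" using assms by (simp add: one_less_power)
  then have "(y - x) * (1 - q\<^sup>2) < 0" using assms by (simp add: mult_pos_neg)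
  then have "(y - q) * (1 + q\<^sup>2 - 2*q*x) < (x - q) * (1 + q\<^sup>2 - 2*q*y)" using key by linarith
  then have "a * ((y - q) * (1 + q\<^sup>2 - 2*q*x)) < a * ((x - q) * (1 + q\<^sup>2 - 2*q*y))"
    using assms by simp
  then show ?thesis using dx dy by (simp add: divide_simps algebra_simps)
qed

theorem lemma3:
  fixes k :: nat and \<alpha> p :: "nat \<Rightarrow> real"
  assumes "k \<ge> 2"
    and "\<And>l. 1 \<le> l \<Longrightarrow> l \<le> k \<Longrightarrow> \<alpha> l > 0"
    and "p 1 = -1" and "p 2 = 1"
    and "\<And>l. 3 \<le> l \<Longrightarrow> l \<le> k \<Longrightarrow> p l > 1"
  shows "(k \<ge> 3 \<longrightarrow> (\<forall>x y. -1 < x \<and> x < y \<and> y < 1 \<longrightarrow> gfun k \<alpha> p y < gfun k \<alpha> p x))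
       \<and> (k = 2 \<longrightarrow> (\<forall>x. -1 < x \<and> x < 1 \<longrightarrow> gfun k \<alpha> p x = (\<alpha> 1 - \<alpha> 2) / 2))"
proof -
  define h where "h x l = \<alpha> l * (x - p l) / (1 + (p l)\<^sup>2 - 2*p l*x)" for x l
  have split: "{1..k} = {1,2} \<union> {3..k}" using assms(1) by auto
  have h12: "h x 1 + h x 2 = (\<alpha> 1 - \<alpha> 2) / 2" if "-1 < x" "x < 1" for x
  proof -
    have "1 + x \<noteq> 0" "1 - x \<noteq> 0" using that by auto
    then show ?thesis unfolding h_def using assms(3,4)
      by (simp add: divide_simps) (simp add: algebra_simps)
  qed
  have g: "gfun k \<alpha> p x = (\<alpha> 1 - \<alpha> 2) / 2 + (\<Sum>l\<in>{3..k}. h x l)" if "-1 < x" "x < 1" for x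
  proof -
    have "gfun k \<alpha> p x = sum (h x) ({1,2} \<union> {3..k})"
      using gfun_eq[OF that] split unfolding h_def by simp
    also have "\<dots> = sum (h x) {1,2} + sum (h x) {3..k}"
      by (rule sum.union_disjoint) auto
    finally show ?thesis using h12[OF that] by simp
  qed
  show ?thesis
  proof (intro conjI impI allI)
    fix x y :: real assume k3: "k \<ge> 3" and xy: "-1 < x \<and> x < y \<and> y < 1"
    have "(\<Sum>l\<in>{3..k}. h y l) < (\<Sum>l\<in>{3..k}. h x l)"
      apply (rule sum_strict_mono)
      using k3 xy assms(2,5) by (auto simp: h_def intro!: h_mono)
    then show "gfun k \<alpha> p y < gfun k \<alpha> p x" using g xy by auto
  next
    fix x :: real assume "k = 2" "-1 < x \<and> x < 1"
    then show "gfun k \<alpha> p x = (\<alpha> 1 - \<alpha> 2) / 2" using g by auto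
  qed
qed

end
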